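(* Let $p$ be a prime, $k\ge 1$ and $n\ge 0$ integers, $\alpha_0,\dots,\alpha_{n-1}\in\mathbb{Z}_p$ and $r_0,\dots,r_{n-1}$ nonnegative integers, with $|r|=r_0+\cdots+r_{n-1}$. Define $$\check{D}_{n;\bar{\alpha},\bar{r}}^{(k)}=\int_{\mathbb{Z}_p}\cdots\int_{\mathbb{Z}_p}\prod_{i=0}^{n-1}(x_1x_2\cdots x_k-\alpha_i)^{r_i}\,d\mu_0(x_1)\cdots d\mu_0(x_k).$$ Then $$\check{D}_{n;\bar{\alpha},\bar{r}}^{(k)}=\sum_{m=0}^{|r|}s_{\bar{\alpha}}(n,m;\bar{r})\sum_{\ell_1=0}^{m}\cdots\sum_{\ell_k=0}^{m}\prod_{i=1}^{k}\frac{(-1)^{\ell_i}\,\ell_i!\,S(m,\ell_i)}{\ell_i+1}.$$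
   Context: For a polynomial (more generally uniformly differentiable) function $f:\mathbb{Z}_p\to\mathbb{C}_p$, the Volkenborn ($p$-adic invariant) integral is $\int_{\mathbb{Z}_p}f(x)\,d\mu_0(x)=\lim_{N\to\infty}p^{-N}\sum_{x=0}^{p^N-1}f(x)$; multiple integrals are iterated integrals in each variable. $S(m,\ell)$ are the Stirling numbers of the second kind, $x^m=\sum_{\ell=0}^m S(m,\ell)x(x-1)\cdots(x-\ell+1)$. The generalized Comtet numbers of the first kind $s_{\bar\alpha}(n,m;\bar r)$ are defined by $\prod_{i=0}^{n-1}(x-\alpha_i)^{r_i}=\sum_{m=0}^{|r|}s_{\bar\alpha}(n,m;\bar r)x^m$, where $\bar\alpha=(\alpha_0,\dots,\alpha_{n-1})$, $\bar r=(r_0,\dots,r_{n-1})$. *)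

theory Defs
  imports "HOL-Computational_Algebra.Polynomial" "HOL-Combinatorics.Stirling"
    "HOL-Library.FuncSet" "HOL-Library.Cardinality" "HOL-Number_Theory.Cong"
begin

section \<open>The field Q_p of p-adic numbers, with p = CARD('p)\<close>

class prime_card = finite +
  assumes prime_card: "prime (CARD('a))"

text \<open>A p-adic integer is represented by a compatible sequence of integers
  f N, where f N is a representative of the residue mod p^N.\<close>

definition compat :: "nat \<Rightarrow> (nat \<Rightarrow> int) \<Rightarrow> bool" where
  "compat p f \<longleftrightarrow> (\<forall>N. [f (Suc N) = f N] (mod (int p ^ N)))"

text \<open>A p-adic number is represented by a pair (e, f) standing for f / p^e.\<close>

type_synonym 'p qp_raw = "'p itself \<times> nat \<times> (nat \<Rightarrow> int)"

definition qrel :: "'p qp_raw \<Rightarrow> 'p qp_raw \<Rightarrow> bool" where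
  "qrel a b \<longleftrightarrow> compat CARD('p) (snd (snd a)) \<and> compat CARD('p) (snd (snd b)) \<and>
     (\<forall>N. [int CARD('p) ^ fst (snd b) * snd (snd a) N = int CARD('p) ^ fst (snd a) * snd (snd b) N] (mod (int CARD('p) ^ N)))"

lemma compat_shift:
  assumes "compat p f" shows "[f (N + k) = f N] (mod (int p ^ N))"
proof (induction k)
  case 0 then show ?case by simp
next
  case (Suc k)
  have "[f (Suc (N + k)) = f (N + k)] (mod (int p ^ (N + k)))"
    using assms unfolding compat_def by blast
  then have "[f (Suc (N + k)) = f (N + k)] (mod (int p ^ N))"
    by (rule cong_dvd_modulus) (simp add: le_imp_power_dvd)
  then show ?case using Suc by (simp add: cong_trans)
qed

lemma compat_cancel:
  assumes p: "p > 0" and c: "compat p d"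
    and h: "\<And>N. [int p ^ e * d N = 0] (mod (int p ^ N))"
  shows "[d N = 0] (mod (int p ^ N))"
proof -
  have "[int p ^ e * d (N + e) = 0] (mod (int p ^ (N + e)))" using h by blast
  then have "int p ^ N * int p ^ e dvd int p ^ e * d (N + e)"
    by (simp add: cong_0_iff power_add)
  then have "int p ^ N dvd d (N + e)"
    using p by (simp add: mult.commute)
  then have "[d (N + e) = 0] (mod (int p ^ N))" by (simp add: cong_0_iff)
  moreover have "[d (N + e) = d N] (mod (int p ^ N))" using compat_shift[OF c] .
  ultimately show ?thesis by (meson cong_sym cong_trans)
qed

lemma compat_add: "compat p f \<Longrightarrow> compat p g \<Longrightarrow> compat p (\<lambda>N. f N + g N)"
  unfolding compat_def by (simp add: cong_add)
lemma compat_mult: "compat p f \<Longrightarrow> compat p g \<Longrightarrow> compat p (\<lambda>N. f N * g N)"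
  unfolding compat_def by (simp add: cong_mult)
lemma compat_const: "compat p (\<lambda>N. c)"
  unfolding compat_def by simp
lemma compat_scale: "compat p f \<Longrightarrow> compat p (\<lambda>N. c * f N)"
  using compat_mult[OF compat_const] by blast
lemma compat_neg: "compat p f \<Longrightarrow> compat p (\<lambda>N. - f N)"
  unfolding compat_def by (simp add: cong_minus_minus_iff)

lemma qrel_part_equivp: "part_equivp (qrel :: 'p::prime_card qp_raw \<Rightarrow> _)"
proof (rule part_equivpI)
  show "\<exists>x. (qrel :: 'p qp_raw \<Rightarrow> _) x x"
    by (rule exI[of _ "(TYPE('p), 0, \<lambda>_. 0)"]) (simp add: qrel_def compat_const)
  show "symp ((qrel :: 'p qp_raw \<Rightarrow> _))"
    unfolding symp_def qrel_def by (auto simp: cong_sym)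
  show "transp ((qrel :: 'p qp_raw \<Rightarrow> _))"
  proof (rule transpI)
    fix a b c assume ab: "(qrel :: 'p qp_raw \<Rightarrow> _) a b" and bc: "(qrel :: 'p qp_raw \<Rightarrow> _) b c"
    obtain t1 e1 f1 where a: "a = (t1, e1, f1)" by (cases a) auto
    obtain t2 e2 f2 where b: "b = (t2, e2, f2)" by (cases b) auto
    obtain t3 e3 f3 where c: "c = (t3, e3, f3)" by (cases c) auto
    define p where "p = int CARD('p)"
    have pp: "CARD('p) > 0" using prime_card[where 'a='p] prime_gt_0_nat by blast
    have c1: "compat CARD('p) f1" and c3: "compat CARD('p) f3"
      using ab bc a c by (auto simp: qrel_def)
    have h1: "[p ^ e2 * f1 N = p ^ e1 * f2 N] (mod p ^ N)" for N
      using ab a b by (auto simp: qrel_def p_def)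
    have h2: "[p ^ e3 * f2 N = p ^ e2 * f3 N] (mod p ^ N)" for N
      using bc b c by (auto simp: qrel_def p_def)
    define d where "d = (\<lambda>N. p ^ e3 * f1 N - p ^ e1 * f3 N)"
    have cd: "compat CARD('p) d" unfolding d_def
      using compat_add[OF compat_scale[OF c1] compat_neg[OF compat_scale[OF c3]]]
      by (simp add: p_def)
    have "[p ^ e2 * d N = 0] (mod p ^ N)" for N
    proof -
      have "[p ^ e3 * (p ^ e2 * f1 N) = p ^ e3 * (p ^ e1 * f2 N)] (mod p ^ N)"
        using h1 by (rule cong_scalar_left)
      moreover have "[p ^ e1 * (p ^ e3 * f2 N) = p ^ e1 * (p ^ e2 * f3 N)] (mod p ^ N)"
        using h2 by (rule cong_scalar_left)
      ultimately have "[p ^ e3 * (p ^ e2 * f1 N) = p ^ e1 * (p ^ e2 * f3 N)] (mod p ^ N)"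
        by (metis (no_types, lifting) cong_trans mult.left_commute)
      then have "[p ^ e3 * (p ^ e2 * f1 N) - p ^ e1 * (p ^ e2 * f3 N) = 0] (mod p ^ N)"
        by (simp add: cong_diff_iff_cong_0)
      then show ?thesis by (simp add: d_def algebra_simps)
    qed
    then have "[d N = 0] (mod p ^ N)" for N
      using compat_cancel[OF pp cd, of e2] by (simp add: p_def)
    then have "[p ^ e3 * f1 N = p ^ e1 * f3 N] (mod p ^ N)" for N
      by (simp add: d_def cong_diff_iff_cong_0)
    then show "(qrel :: 'p qp_raw \<Rightarrow> _) a c" using a c c1 c3 by (simp add: qrel_def p_def)
  qed
qed

quotient_type (overloaded) 'p qp = "'p::prime_card qp_raw" / partial: qrel
  by (rule qrel_part_equivp)

definition plus_raw :: "'p qp_raw \<Rightarrow> 'p qp_raw \<Rightarrow> 'p qp_raw" where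
  "plus_raw a b = (case a of (t, e, f) \<Rightarrow> case b of (_, d, g) \<Rightarrow>
     (t, e + d, \<lambda>N. int CARD('p) ^ d * f N + int CARD('p) ^ e * g N))"
definition minus_raw :: "'p qp_raw \<Rightarrow> 'p qp_raw \<Rightarrow> 'p qp_raw" where
  "minus_raw a b = (case a of (t, e, f) \<Rightarrow> case b of (_, d, g) \<Rightarrow>
     (t, e + d, \<lambda>N. int CARD('p) ^ d * f N - int CARD('p) ^ e * g N))"
definition times_raw :: "'p qp_raw \<Rightarrow> 'p qp_raw \<Rightarrow> 'p qp_raw" where
  "times_raw a b = (case a of (t, e, f) \<Rightarrow> case b of (_, d, g) \<Rightarrow>
     (t, e + d, \<lambda>N. f N * g N))"
definition uminus_raw :: "'p qp_raw \<Rightarrow> 'p qp_raw" where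
  "uminus_raw a = (case a of (t, e, f) \<Rightarrow> (t, e, \<lambda>N. - f N))"

lemma qrel_iff: "qrel (t, e, f) (t', e', g) \<longleftrightarrow> compat CARD('p) f \<and> compat CARD('p) g \<and>
   (\<forall>N. [int CARD('p) ^ e' * f N = int CARD('p) ^ e * g N] (mod (int CARD('p) ^ N)))"
  for t t' :: "'p itself"
  by (simp add: qrel_def qrel_def)

lemma compat_pp: "compat CARD('p) f \<longleftrightarrow> (\<forall>N. [f (Suc N) = f N] (mod (int CARD('p) ^ N)))"
  by (simp add: compat_def qrel_def)

lemma plus_raw_rsp:
  fixes x y x' y' :: "'p qp_raw"
  assumes "qrel x y" "qrel x' y'"
  shows "qrel (plus_raw x x') (plus_raw y y')"
proof -
  obtain t1 e1 f1 where x: "x = (t1, e1, f1)" by (cases x) auto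
  obtain t2 e2 f2 where y: "y = (t2, e2, f2)" by (cases y) auto
  obtain s1 d1 g1 where x': "x' = (s1, d1, g1)" by (cases x') auto
  obtain s2 d2 g2 where y': "y' = (s2, d2, g2)" by (cases y') auto
  define p where "p = int CARD('p)"
  have A: "compat CARD('p) f1" "compat CARD('p) f2" "compat CARD('p) g1" "compat CARD('p) g2"
    and h1: "\<And>N. [p ^ e2 * f1 N = p ^ e1 * f2 N] (mod p ^ N)"
    and h2: "\<And>N. [p ^ d2 * g1 N = p ^ d1 * g2 N] (mod p ^ N)"
    using assms x y x' y' by (auto simp: qrel_iff p_def)
  have "[p ^ (e2 + d2) * (p ^ d1 * f1 N + p ^ e1 * g1 N) =
         p ^ (e1 + d1) * (p ^ d2 * f2 N + p ^ e2 * g2 N)] (mod p ^ N)" for N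
  proof -
    have "[p ^ (d1 + d2) * (p ^ e2 * f1 N) + p ^ (e1 + e2) * (p ^ d2 * g1 N) =
           p ^ (d1 + d2) * (p ^ e1 * f2 N) + p ^ (e1 + e2) * (p ^ d1 * g2 N)] (mod p ^ N)"
      by (intro cong_add cong_scalar_left h1 h2)
    then show ?thesis by (simp add: algebra_simps power_add)
  qed
  moreover have "compat CARD('p) (\<lambda>N. p ^ d1 * f1 N + p ^ e1 * g1 N)"
    "compat CARD('p) (\<lambda>N. p ^ d2 * f2 N + p ^ e2 * g2 N)"
    using A by (auto intro!: compat_add compat_scale)
  ultimately show ?thesis using x y x' y'
    by (simp add: plus_raw_def qrel_iff p_def)
qed

lemma uminus_raw_rsp:
  fixes x y :: "'p qp_raw"
  assumes "qrel x y" shows "qrel (uminus_raw x) (uminus_raw y)"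
proof -
  obtain t1 e1 f1 where x: "x = (t1, e1, f1)" by (cases x) auto
  obtain t2 e2 f2 where y: "y = (t2, e2, f2)" by (cases y) auto
  show ?thesis using assms x y
    by (auto simp: qrel_iff uminus_raw_def compat_neg cong_minus_minus_iff)
qed

lemma times_raw_rsp:
  fixes x y x' y' :: "'p qp_raw"
  assumes "qrel x y" "qrel x' y'"
  shows "qrel (times_raw x x') (times_raw y y')"
proof -
  obtain t1 e1 f1 where x: "x = (t1, e1, f1)" by (cases x) auto
  obtain t2 e2 f2 where y: "y = (t2, e2, f2)" by (cases y) auto
  obtain s1 d1 g1 where x': "x' = (s1, d1, g1)" by (cases x') auto
  obtain s2 d2 g2 where y': "y' = (s2, d2, g2)" by (cases y') auto
  define p where "p = int CARD('p)"
  have A: "compat CARD('p) f1" "compat CARD('p) f2" "compat CARD('p) g1" "compat CARD('p) g2"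
    and h1: "\<And>N. [p ^ e2 * f1 N = p ^ e1 * f2 N] (mod p ^ N)"
    and h2: "\<And>N. [p ^ d2 * g1 N = p ^ d1 * g2 N] (mod p ^ N)"
    using assms x y x' y' by (auto simp: qrel_iff p_def)
  have "[p ^ (e2 + d2) * (f1 N * g1 N) = p ^ (e1 + d1) * (f2 N * g2 N)] (mod p ^ N)" for N
  proof -
    have "[(p ^ e2 * f1 N) * (p ^ d2 * g1 N) = (p ^ e1 * f2 N) * (p ^ d1 * g2 N)] (mod p ^ N)"
      by (intro cong_mult h1 h2)
    then show ?thesis by (simp add: algebra_simps power_add)
  qed
  moreover have "compat CARD('p) (\<lambda>N. f1 N * g1 N)" "compat CARD('p) (\<lambda>N. f2 N * g2 N)"
    using A by (auto intro!: compat_mult)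
  ultimately show ?thesis using x y x' y'
    by (simp add: times_raw_def qrel_iff p_def)
qed

lemma minus_raw_eq: "minus_raw x y = plus_raw x (uminus_raw y)"
  by (cases x; cases y) (simp add: minus_raw_def plus_raw_def uminus_raw_def)

lemma minus_raw_rsp:
  assumes "qrel x y" "qrel x' y'"
  shows "qrel (minus_raw x x') (minus_raw y y')"
  unfolding minus_raw_eq using assms by (intro plus_raw_rsp uminus_raw_rsp)


lemma qrel_by:
  fixes t t' :: "'p itself"
  assumes "compat CARD('p) f" "compat CARD('p) g"
    "\<And>N. int CARD('p) ^ e' * f N = int CARD('p) ^ e * g N"
  shows "qrel (t, e, f) (t', e', g)"
  using assms by (simp add: qrel_iff)

lemma qrel_compat: "qrel (t, e, f) (t', e', g) \<Longrightarrow> compat CARD('p) f"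
  for t t' :: "'p itself" by (simp add: qrel_iff)

lemma compat_diff: "compat p f \<Longrightarrow> compat p g \<Longrightarrow> compat p (\<lambda>N. f N - g N)"
  unfolding compat_def by (simp add: cong_diff)

lemmas compat_intros = compat_diff compat_add compat_mult compat_const compat_scale compat_neg

instantiation qp :: (prime_card) comm_ring_1
begin

lift_definition zero_qp :: "'a qp" is "(TYPE('a), 0, \<lambda>_. 0)"
  by (simp add: qrel_iff compat_const)
lift_definition one_qp :: "'a qp" is "(TYPE('a), 0, \<lambda>_. 1)"
  by (simp add: qrel_iff compat_const)
lift_definition plus_qp :: "'a qp \<Rightarrow> 'a qp \<Rightarrow> 'a qp" is plus_raw
  by (rule plus_raw_rsp)
lift_definition minus_qp :: "'a qp \<Rightarrow> 'a qp \<Rightarrow> 'a qp" is minus_raw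
  by (rule minus_raw_rsp)
lift_definition times_qp :: "'a qp \<Rightarrow> 'a qp \<Rightarrow> 'a qp" is times_raw
  by (rule times_raw_rsp)
lift_definition uminus_qp :: "'a qp \<Rightarrow> 'a qp" is uminus_raw
  by (rule uminus_raw_rsp)

instance
proof
  fix a b c :: "'a qp"
  show "a * b * c = a * (b * c)"
    by transfer (auto simp: times_raw_def ac_simps intro!: qrel_by compat_intros dest!: qrel_compat)
  show "a * b = b * a"
    by transfer (auto simp: times_raw_def ac_simps intro!: qrel_by compat_intros dest!: qrel_compat)
  show "1 * a = a"
    by transfer (auto simp: times_raw_def intro!: qrel_by compat_intros dest!: qrel_compat)
  show "a + b + c = a + (b + c)"
    by transfer (auto simp: plus_raw_def algebra_simps power_add intro!: qrel_by compat_intros dest!: qrel_compat)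
  show "a + b = b + a"
    by transfer (auto simp: plus_raw_def algebra_simps intro!: qrel_by compat_intros dest!: qrel_compat)
  show "0 + a = a"
    by transfer (auto simp: plus_raw_def intro!: qrel_by compat_intros dest!: qrel_compat)
  show "- a + a = 0"
    by transfer (auto simp: plus_raw_def uminus_raw_def intro!: qrel_by compat_intros dest!: qrel_compat)
  show "a - b = a + - b"
    by transfer (auto simp: plus_raw_def minus_raw_def uminus_raw_def intro!: qrel_by compat_intros dest!: qrel_compat)
  show "(a + b) * c = a * c + b * c"
    by transfer (auto simp: plus_raw_def times_raw_def algebra_simps power_add intro!: qrel_by compat_intros dest!: qrel_compat)
  show "(0::'a qp) \<noteq> 1"
  proof transfer
    have "CARD('a) > 1" using prime_card[where 'a='a] prime_gt_1_nat by blast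
    then show "\<not> qrel (TYPE('a), 0, \<lambda>_. 0::int) (TYPE('a), 0, \<lambda>_. 1)"
      by (auto simp: qrel_iff cong_def intro!: exI[of _ 1])
  qed
qed

end


lift_definition zp_of_seq :: "(nat \<Rightarrow> int) \<Rightarrow> 'p::prime_card qp" is
  "\<lambda>f. (TYPE('p), 0::nat, if compat CARD('p) f then f else (\<lambda>_. 0))"
  by (simp add: qrel_iff compat_const)

definition Zp :: "'p::prime_card qp set" where
  "Zp = {zp_of_seq f | f. compat CARD('p) f}"

definition padic_lim :: "(nat \<Rightarrow> 'p::prime_card qp) \<Rightarrow> 'p qp \<Rightarrow> bool" where
  "padic_lim a L \<longleftrightarrow>
     (\<forall>M. \<exists>N0. \<forall>N\<ge>N0. \<exists>z\<in>Zp. a N - L = of_nat (CARD('p) ^ M) * z)"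

definition qp_div :: "'p::prime_card qp \<Rightarrow> 'p qp \<Rightarrow> 'p qp" where
  "qp_div x y = (THE z. y * z = x)"

text \<open>The Volkenborn integral of f only depends on the values of f at the
  nonnegative integers 0, 1, 2, ...; we take f as a function on those.\<close>
definition volkenborn :: "(nat \<Rightarrow> 'p::prime_card qp) \<Rightarrow> 'p qp" where
  "volkenborn f = (THE L. padic_lim
     (\<lambda>N. qp_div (\<Sum>x<CARD('p) ^ N. f x) (of_nat (CARD('p) ^ N))) L)"

text \<open>Iterated integral over x_1, ..., x_k (x_1 innermost); the argument list is
  [x_1, ..., x_k].\<close>
fun mvolkenborn :: "nat \<Rightarrow> (nat list \<Rightarrow> 'p::prime_card qp) \<Rightarrow> 'p qp" where
  "mvolkenborn 0 F = F []"
| "mvolkenborn (Suc k) F = volkenborn (\<lambda>x. mvolkenborn k (\<lambda>xs. F (xs @ [x])))"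

definition comtet1 :: "(nat \<Rightarrow> 'a::comm_ring_1) \<Rightarrow> nat \<Rightarrow> (nat \<Rightarrow> nat) \<Rightarrow> nat \<Rightarrow> 'a" where
  "comtet1 \<alpha> n r m = coeff (\<Prod>i<n. [:- \<alpha> i, 1:] ^ r i) m"

end

theory Submission
  imports Defs
begin


lift_definition qp_of :: "nat \<Rightarrow> (nat \<Rightarrow> int) \<Rightarrow> 'p::prime_card qp" is
  "\<lambda>e f. (TYPE('p), e, if compat CARD('p) f then f else (\<lambda>_. 0))"
  by (simp add: qrel_iff compat_const)

lemma qp_of_eq:
  assumes "compat CARD('p::prime_card) f" "compat CARD('p) g"
  shows "(qp_of e f = (qp_of d g :: 'p qp)) \<longleftrightarrow>
     (\<forall>N. [int CARD('p) ^ d * f N = int CARD('p) ^ e * g N] (mod (int CARD('p) ^ N)))"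
  using assms by transfer (simp add: qrel_iff)

lemma qp_of_cases: "\<exists>e f. compat CARD('p::prime_card) f \<and> x = (qp_of e f :: 'p qp)"
proof transfer
  fix x :: "'p qp_raw" assume "qrel x x"
  then show "\<exists>e f. compat CARD('p) f \<and> qrel x (TYPE('p), e, if compat CARD('p) f then f else (\<lambda>_. 0))"
  proof (cases x)
    case (fields a b c)
    then show ?thesis using \<open>qrel x x\<close>
      by (intro exI[of _ b] exI[of _ c]) (auto simp: qrel_iff)
  qed
qed

lemma qp_of_plus:
  assumes "compat CARD('p::prime_card) f" "compat CARD('p) g"
  shows "(qp_of e f :: 'p qp) + qp_of d g = qp_of (e + d) (\<lambda>N. int CARD('p) ^ d * f N + int CARD('p) ^ e * g N)"
  using assms by transfer (auto simp: plus_raw_def qrel_iff intro!: compat_intros)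

lemma qp_of_times:
  assumes "compat CARD('p::prime_card) f" "compat CARD('p) g"
  shows "(qp_of e f :: 'p qp) * qp_of d g = qp_of (e + d) (\<lambda>N. f N * g N)"
  using assms by transfer (auto simp: times_raw_def qrel_iff intro!: compat_intros)

lemma qp_of_uminus:
  assumes "compat CARD('p::prime_card) f"
  shows "- (qp_of e f :: 'p qp) = qp_of e (\<lambda>N. - f N)"
  using assms by transfer (auto simp: uminus_raw_def qrel_iff intro!: compat_intros)

lemma qp_of_zero: "(0 :: 'p::prime_card qp) = qp_of 0 (\<lambda>_. 0)"
  by transfer (auto simp: qrel_iff compat_const)

lemma qp_of_one: "(1 :: 'p::prime_card qp) = qp_of 0 (\<lambda>_. 1)"
  by transfer (auto simp: qrel_iff compat_const)

lemma zp_of_seq_qp_of: "compat CARD('p) f \<Longrightarrow> (zp_of_seq f :: 'p::prime_card qp) = qp_of 0 f"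
  by transfer (auto simp: qrel_iff)


lemma P_gt1: "CARD('p::prime_card) > 1"
  using prime_card[where 'a='p] prime_gt_1_nat by blast

lemma qp_of_nat: "(of_nat n :: 'p::prime_card qp) = qp_of 0 (\<lambda>_. int n)"
proof (induction n)
  case 0 then show ?case by (simp add: qp_of_zero)
next
  case (Suc n)
  have "(of_nat (Suc n) :: 'p qp) = qp_of 0 (\<lambda>_. 1) + qp_of 0 (\<lambda>_. int n)"
    using Suc by (simp add: qp_of_one)
  also have "\<dots> = qp_of 0 (\<lambda>_. int (Suc n))"
    by (subst qp_of_plus) (auto simp: compat_const)
  finally show ?case .
qed

lemma qp_of_int: "(of_int c :: 'p::prime_card qp) = qp_of 0 (\<lambda>_. c)"
proof (cases "c \<ge> 0")
  case True
  then obtain n where "c = int n" by (metis nonneg_eq_int)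
  then show ?thesis by (simp add: qp_of_nat)
next
  case False
  then obtain n where "c = - int n" by (intro that[of "nat (-c)"]) simp
  then show ?thesis by (simp add: qp_of_nat qp_of_uminus compat_const)
qed

lemma Zp_iff: "x \<in> Zp \<longleftrightarrow> (\<exists>f. compat CARD('p) f \<and> x = (qp_of 0 f :: 'p::prime_card qp))"
  unfolding Zp_def
proof safe
  fix f assume "compat CARD('p) f" then show "\<exists>fa. compat CARD('p) fa \<and> zp_of_seq f = (qp_of 0 fa :: 'p qp)"
    by (auto simp: zp_of_seq_qp_of)
next
  fix f assume "compat CARD('p) f" then show "\<exists>fa. (qp_of 0 f :: 'p qp) = zp_of_seq fa \<and> compat CARD('p) fa"
    by (intro exI[of _ f]) (simp add: zp_of_seq_qp_of)
qed

lemma Zp_add: "x \<in> Zp \<Longrightarrow> y \<in> Zp \<Longrightarrow> x + y \<in> Zp"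
  unfolding Zp_iff by (auto simp: qp_of_plus intro!: compat_intros)

lemma Zp_mult: "x \<in> Zp \<Longrightarrow> y \<in> Zp \<Longrightarrow> x * y \<in> Zp"
  unfolding Zp_iff by (auto simp: qp_of_times intro!: compat_intros)

lemma Zp_uminus: "x \<in> Zp \<Longrightarrow> - x \<in> Zp"
  unfolding Zp_iff by (auto simp: qp_of_uminus intro!: compat_intros)

lemma Zp_diff: "x \<in> Zp \<Longrightarrow> y \<in> Zp \<Longrightarrow> x - y \<in> Zp"
  using Zp_add Zp_uminus by (metis diff_conv_add_uminus)

lemma Zp_of_int: "(of_int c :: 'p::prime_card qp) \<in> Zp"
  unfolding Zp_iff qp_of_int by (auto intro!: compat_intros)

lemma Zp_of_nat: "(of_nat c :: 'p::prime_card qp) \<in> Zp"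
  using Zp_of_int[of "int c"] by simp

lemma Zp_0: "(0 :: 'p::prime_card qp) \<in> Zp" using Zp_of_nat[of 0] by simp
lemma Zp_1: "(1 :: 'p::prime_card qp) \<in> Zp" using Zp_of_nat[of 1] by simp

lemma scale_Zp: "\<exists>e. of_nat (CARD('p) ^ e) * x \<in> (Zp :: 'p::prime_card qp set)"
proof -
  obtain e f where f: "compat CARD('p) f" "x = (qp_of e f :: 'p qp)" using qp_of_cases by blast
  have "of_nat (CARD('p) ^ e) * x = qp_of e (\<lambda>N. int CARD('p) ^ e * f N)"
    using f by (simp add: qp_of_nat qp_of_times compat_const)
  also have "\<dots> = qp_of 0 f"
    using f by (subst qp_of_eq) (auto intro!: compat_intros)
  finally show ?thesis using f by (auto simp: Zp_iff)
qed

lemma inv_ppow: "of_nat (CARD('p) ^ a) * (qp_of a (\<lambda>_. 1) :: 'p::prime_card qp) = 1"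
  by (simp add: qp_of_nat qp_of_times compat_const qp_of_one qp_of_eq)

lemma zero_crit:
  assumes "\<And>M. \<exists>z\<in>Zp. x = of_nat (CARD('p) ^ M) * z"
  shows "x = (0 :: 'p::prime_card qp)"
proof -
  obtain e f where f: "compat CARD('p) f" "x = (qp_of e f :: 'p qp)" using qp_of_cases by blast
  have "[f N = 0] (mod (int CARD('p) ^ N))" for N
  proof -
    obtain z where z: "z \<in> Zp" "x = of_nat (CARD('p) ^ N) * z" using assms by blast
    then obtain g where g: "compat CARD('p) g" "z = qp_of 0 g" by (auto simp: Zp_iff)
    have "x = qp_of 0 (\<lambda>K. int CARD('p) ^ N * g K)"
      using z g by (simp add: qp_of_nat qp_of_times compat_const)
    then have "\<forall>K. [f K = int CARD('p) ^ e * (int CARD('p) ^ N * g K)] (mod (int CARD('p) ^ K))"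
      using f g by (simp add: qp_of_eq compat_intros)
    then have "[f N = int CARD('p) ^ e * (int CARD('p) ^ N * g N)] (mod (int CARD('p) ^ N))" by blast
    moreover have "[int CARD('p) ^ e * (int CARD('p) ^ N * g N) = 0] (mod (int CARD('p) ^ N))"
      by (simp add: cong_0_iff)
    ultimately show ?thesis by (rule cong_trans)
  qed
  then show ?thesis using f by (simp add: qp_of_zero qp_of_eq compat_const)
qed

lemma inv_unit:
  assumes "coprime (int u) (int CARD('p::prime_card))"
  shows "\<exists>z\<in>(Zp :: 'p qp set). of_nat u * z = 1"
proof -
  define P where "P = int CARD('p)"
  have cop: "coprime (int u) (P ^ N)" for N using assms by (simp add: P_def)
  define g where "g N = (SOME v. [int u * v = 1] (mod P ^ N))" for N
  have g: "[int u * g N = 1] (mod P ^ N)" for N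
    unfolding g_def by (rule someI_ex) (rule cong_solve_coprime_int[OF cop])
  have "compat CARD('p) g"
    unfolding compat_def
  proof
    fix N
    have "[int u * g (Suc N) = 1] (mod P ^ N)"
      using g[of "Suc N"] by (rule cong_dvd_modulus) (simp add: le_imp_power_dvd)
    then have "[int u * g (Suc N) = int u * g N] (mod P ^ N)"
      using g[of N] by (meson cong_sym cong_trans)
    then show "[g (Suc N) = g N] (mod int CARD('p) ^ N)"
      using cong_mult_lcancel[OF cop] by (simp add: P_def)
  qed
  moreover have "of_nat u * (qp_of 0 g :: 'p qp) = 1"
  proof -
    have c: "compat CARD('p) g" by fact
    have "of_nat u * (qp_of 0 g :: 'p qp) = qp_of 0 (\<lambda>N. int u * g N)"
      unfolding qp_of_nat using c by (subst qp_of_times) (auto simp: compat_const)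
    also have "\<dots> = qp_of 0 (\<lambda>_. 1)"
      apply (subst qp_of_eq)
      using c g by (auto simp: P_def intro!: compat_intros)
    finally show ?thesis by (simp add: qp_of_one)
  qed
  ultimately show ?thesis by (intro bexI[of _ "qp_of 0 g"]) (auto simp: Zp_iff)
qed



lemma nat_decomp:
  assumes "prime (P::nat)" "m > 0"
  shows "\<exists>a u. m = P ^ a * u \<and> \<not> P dvd u"
  using assms(2)
proof (induction m rule: less_induct)
  case (less m)
  show ?case
  proof (cases "P dvd m")
    case True
    then obtain m' where m': "m = P * m'" by blast
    have "P > 1" using assms(1) prime_gt_1_nat by blast
    then have "m' < m" "m' > 0" using m' less.prems by auto
    then obtain a u where "m' = P ^ a * u" "\<not> P dvd u" using less.IH by blast
    then show ?thesis using m' by (intro exI[of _ "Suc a"] exI[of _ u]) simp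
  next
    case False
    then show ?thesis by (intro exI[of _ 0] exI[of _ m]) simp
  qed
qed

lemma inv_nat_exists:
  assumes "m > 0"
  shows "\<exists>z. of_nat m * (z :: 'p::prime_card qp) = 1"
proof -
  have pr: "prime CARD('p)" by (rule prime_card)
  obtain a u where au: "m = CARD('p) ^ a * u" "\<not> CARD('p) dvd u"
    using nat_decomp[OF pr assms] by blast
  have "coprime CARD('p) u" using pr au(2) by (simp add: prime_imp_coprime)
  then have "coprime (int u) (int CARD('p))" by (simp add: coprime_commute)
  then obtain w where w: "of_nat u * (w :: 'p qp) = 1" using inv_unit by blast
  have "of_nat m * (qp_of a (\<lambda>_. 1) * w) = (of_nat (CARD('p) ^ a) * (qp_of a (\<lambda>_. 1) :: 'p qp)) * (of_nat u * w)"
    using au(1) by (simp add: ac_simps)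
  also have "\<dots> = 1" using inv_ppow w by simp
  finally show ?thesis by blast
qed

definition ninv :: "nat \<Rightarrow> 'p::prime_card qp" where
  "ninv m = (SOME z. of_nat m * z = 1)"

lemma ninv: "m > 0 \<Longrightarrow> of_nat m * (ninv m :: 'p::prime_card qp) = 1"
  unfolding ninv_def by (rule someI_ex) (rule inv_nat_exists)

lemma qp_div_nat:
  assumes "m > 0"
  shows "qp_div x (of_nat m) = x * (ninv m :: 'p::prime_card qp)"
  unfolding qp_div_def
proof (rule the_equality)
  have h: "of_nat m * (ninv m :: 'p qp) = 1" using assms by (rule ninv)
  have "of_nat m * (x * ninv m) = x * (of_nat m * ninv m)" by (simp only: ac_simps)
  then show "of_nat m * (x * ninv m) = x" by (simp only: h mult_1_right)
next
  fix z assume z: "of_nat m * z = x"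
  have h: "of_nat m * (ninv m :: 'p qp) = 1" using assms by (rule ninv)
  have "x * ninv m = (of_nat m * ninv m) * z" by (simp only: z[symmetric] ac_simps)
  then show "z = x * ninv m" by (simp only: h mult_1_left)
qed

lemma ninv_mult: "m > 0 \<Longrightarrow> n > 0 \<Longrightarrow> (ninv (m * n) :: 'p::prime_card qp) = ninv m * ninv n"
proof -
  assume m: "m > 0" and n: "n > 0"
  have hm: "of_nat m * (ninv m :: 'p qp) = 1" using m by (rule ninv)
  have hn: "of_nat n * (ninv n :: 'p qp) = 1" using n by (rule ninv)
  have h: "of_nat (m*n) * (ninv (m*n) :: 'p qp) = 1" using m n by (intro ninv) simp
  have "(ninv m * ninv n :: 'p qp) = (of_nat (m*n) * ninv (m*n)) * (ninv m * ninv n)"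
    by (simp only: h mult_1_left)
  also have "\<dots> = ninv (m*n) * ((of_nat m * ninv m) * (of_nat n * ninv n))"
    by (simp only: of_nat_mult ac_simps)
  also have "\<dots> = ninv (m*n)" by (simp only: hm hn mult_1_right)
  finally show ?thesis by simp
qed

definition pZ :: "nat \<Rightarrow> 'p::prime_card qp \<Rightarrow> bool" where
  "pZ M x \<longleftrightarrow> (\<exists>z\<in>Zp. x = of_nat (CARD('p) ^ M) * z)"

lemma padic_lim_pZ: "padic_lim a L \<longleftrightarrow> (\<forall>M. \<exists>N0. \<forall>N\<ge>N0. pZ M (a N - L))"
  unfolding padic_lim_def pZ_def by simp

lemma pZ_0: "pZ M 0"
  unfolding pZ_def using Zp_0 by force

lemma pZ_add: "pZ M x \<Longrightarrow> pZ M y \<Longrightarrow> pZ M (x + y)"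
  unfolding pZ_def using Zp_add by (metis distrib_left)

lemma pZ_uminus: "pZ M x \<Longrightarrow> pZ M (- x)"
  unfolding pZ_def using Zp_uminus by (metis mult_minus_right)

lemma pZ_diff: "pZ M x \<Longrightarrow> pZ M y \<Longrightarrow> pZ M (x - y)"
  using pZ_add pZ_uminus by (metis diff_conv_add_uminus)

lemma pZ_mono: "M \<le> M' \<Longrightarrow> pZ M' x \<Longrightarrow> pZ M x"
proof -
  assume "M \<le> M'" "pZ M' x"
  then obtain z where z: "z \<in> Zp" "x = of_nat (CARD('a) ^ M') * z" unfolding pZ_def by blast
  have "x = of_nat (CARD('a) ^ M) * (of_nat (CARD('a) ^ (M' - M)) * z)"
    using z \<open>M \<le> M'\<close> by (simp add: mult.assoc[symmetric] power_add[symmetric])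
  then show "pZ M x" unfolding pZ_def using Zp_mult[OF Zp_of_nat z(1)] by blast
qed

lemma pZ_scale:
  assumes "of_nat (CARD('p) ^ e) * c \<in> (Zp :: 'p::prime_card qp set)" "pZ (M + e) x"
  shows "pZ M (c * x)"
proof -
  obtain z where z: "z \<in> Zp" "x = of_nat (CARD('p) ^ (M + e)) * z" using assms(2) unfolding pZ_def by blast
  have "c * x = of_nat (CARD('p) ^ M) * ((of_nat (CARD('p) ^ e) * c) * z)"
    using z by (simp add: power_add ac_simps)
  then show ?thesis unfolding pZ_def using Zp_mult[OF assms(1) z(1)] by blast
qed

lemma pZ_zero: "(\<And>M. pZ M x) \<Longrightarrow> x = 0"
  unfolding pZ_def by (rule zero_crit) blast

lemma padic_lim_unique: "padic_lim a L \<Longrightarrow> padic_lim a K \<Longrightarrow> L = K"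
proof -
  assume L: "padic_lim a L" and K: "padic_lim a K"
  have "pZ M (K - L)" for M
  proof -
    obtain N1 where N1: "\<forall>N\<ge>N1. pZ M (a N - L)" using L unfolding padic_lim_pZ by blast
    obtain N2 where N2: "\<forall>N\<ge>N2. pZ M (a N - K)" using K unfolding padic_lim_pZ by blast
    have "pZ M ((a (max N1 N2) - L) - (a (max N1 N2) - K))" using N1 N2 by (rule_tac pZ_diff) auto
    then show ?thesis by simp
  qed
  then show ?thesis using pZ_zero[of "K - L"] by simp
qed

lemma the_padic_lim: "padic_lim a L \<Longrightarrow> (THE L. padic_lim a L) = L"
  using padic_lim_unique by blast

lemma padic_lim_const: "padic_lim (\<lambda>_. c) c"
  unfolding padic_lim_pZ by (simp add: pZ_0)

lemma padic_lim_add: "padic_lim a L \<Longrightarrow> padic_lim b K \<Longrightarrow> padic_lim (\<lambda>N. a N + b N) (L + K)"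
  unfolding padic_lim_pZ
proof (intro allI)
  fix M assume L: "\<forall>M. \<exists>N0. \<forall>N\<ge>N0. pZ M (a N - L)" and K: "\<forall>M. \<exists>N0. \<forall>N\<ge>N0. pZ M (b N - K)"
  obtain N1 where N1: "\<forall>N\<ge>N1. pZ M (a N - L)" using L by blast
  obtain N2 where N2: "\<forall>N\<ge>N2. pZ M (b N - K)" using K by blast
  have "\<forall>N\<ge>max N1 N2. pZ M (a N + b N - (L + K))"
  proof safe
    fix N assume "max N1 N2 \<le> N"
    then have "pZ M ((a N - L) + (b N - K))" using N1 N2 by (intro pZ_add) auto
    then show "pZ M (a N + b N - (L + K))" by (simp add: algebra_simps)
  qed
  then show "\<exists>N0. \<forall>N\<ge>N0. pZ M (a N + b N - (L + K))" by blast
qed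

lemma padic_lim_cmult: "padic_lim a L \<Longrightarrow> padic_lim (\<lambda>N. c * a N) (c * L)"
  unfolding padic_lim_pZ
proof (intro allI)
  fix M assume L: "\<forall>M. \<exists>N0. \<forall>N\<ge>N0. pZ M (a N - L)"
  obtain e where e: "of_nat (CARD('a) ^ e) * c \<in> Zp" using scale_Zp by blast
  obtain N1 where N1: "\<forall>N\<ge>N1. pZ (M + e) (a N - L)" using L by blast
  have "\<forall>N\<ge>N1. pZ M (c * a N - c * L)"
    using N1 pZ_scale[OF e] by (metis right_diff_distrib)
  then show "\<exists>N0. \<forall>N\<ge>N0. pZ M (c * a N - c * L)" by blast
qed

lemma padic_lim_sum:
  "finite S \<Longrightarrow> (\<And>j. j \<in> S \<Longrightarrow> padic_lim (a j) (L j)) \<Longrightarrow> padic_lim (\<lambda>N. \<Sum>j\<in>S. a j N) (\<Sum>j\<in>S. L j)"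
  by (induction S rule: finite_induct) (auto intro: padic_lim_add simp: padic_lim_const)

lemma padic_lim_eventually:
  assumes "padic_lim a L" "\<And>N. N \<ge> N0 \<Longrightarrow> a N = b N"
  shows "padic_lim b L"
  unfolding padic_lim_pZ
proof
  fix M
  obtain N1 where N1: "\<forall>N\<ge>N1. pZ M (a N - L)" using assms(1) unfolding padic_lim_pZ by blast
  then have "\<forall>N\<ge>max N0 N1. pZ M (b N - L)" using assms(2) by auto
  then show "\<exists>N0. \<forall>N\<ge>N0. pZ M (b N - L)" by blast
qed

definition avg :: "(nat \<Rightarrow> 'p::prime_card qp) \<Rightarrow> nat \<Rightarrow> 'p qp" where
  "avg f N = (\<Sum>x<CARD('p) ^ N. f x) * ninv (CARD('p) ^ N)"

definition has_volk :: "(nat \<Rightarrow> 'p::prime_card qp) \<Rightarrow> 'p qp \<Rightarrow> bool" where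
  "has_volk f L \<longleftrightarrow> padic_lim (avg f) L"

lemma volkenborn_eq: "has_volk f L \<Longrightarrow> volkenborn f = L"
proof -
  assume h: "has_volk f L"
  have "(\<lambda>N. qp_div (\<Sum>x<CARD('a) ^ N. f x) (of_nat (CARD('a) ^ N))) = avg f"
  proof
    fix N
    have "CARD('a) ^ N > 0" using P_gt1[where 'p='a] by simp
    then show "qp_div (\<Sum>x<CARD('a) ^ N. f x) (of_nat (CARD('a) ^ N)) = avg f N"
      unfolding avg_def by (rule qp_div_nat)
  qed
  then show ?thesis using h unfolding volkenborn_def has_volk_def by (simp add: the_padic_lim)
qed

lemma has_volk_cmult: "has_volk f L \<Longrightarrow> has_volk (\<lambda>x. c * f x) (c * L)"
  unfolding has_volk_def avg_def
  by (drule padic_lim_cmult[where c=c]) (simp add: sum_distrib_left ac_simps)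

lemma has_volk_sum:
  assumes "finite S" "\<And>j. j \<in> S \<Longrightarrow> has_volk (g j) (L j)"
  shows "has_volk (\<lambda>x. \<Sum>j\<in>S. g j x) (\<Sum>j\<in>S. L j)"
proof -
  have "padic_lim (\<lambda>N. \<Sum>j\<in>S. avg (g j) N) (\<Sum>j\<in>S. L j)"
    using assms by (intro padic_lim_sum) (auto simp: has_volk_def)
  moreover have "(\<lambda>N. \<Sum>j\<in>S. avg (g j) N) = avg (\<lambda>x. \<Sum>j\<in>S. g j x)"
  proof
    fix N
    show "(\<Sum>j\<in>S. avg (g j) N) = avg (\<lambda>x. \<Sum>j\<in>S. g j x) N"
      unfolding avg_def sum_distrib_right[symmetric] by (rule arg_cong[where f="\<lambda>t. t * _"], rule sum.swap)
  qed
  ultimately show ?thesis by (simp add: has_volk_def)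
qed



definition ff :: "int \<Rightarrow> nat \<Rightarrow> int" where
  "ff x l = (\<Prod>j<l. x - int j)"

lemma ff_0[simp]: "ff x 0 = 1" by (simp add: ff_def)

lemma ff_Suc: "ff x (Suc l) = ff x l * (x - int l)"
  by (simp add: ff_def)

lemma ff_Suc_shift: "ff x (Suc l) = x * (\<Prod>i<l. x - int (Suc i))"
  unfolding ff_def by (subst prod.lessThan_Suc_shift) simp

lemma ff_Suc_Suc: "ff (x + 1) (Suc l) = (x + 1) * ff x l"
  unfolding ff_Suc_shift by (simp add: ff_def)

lemma ff_sum: "int (Suc l) * (\<Sum>x<n. ff (int x) l) = ff (int n) (Suc l)"
proof (induction n)
  case 0 then show ?case by (simp add: ff_Suc_shift)
next
  case (Suc n)
  have "int (Suc l) * (\<Sum>x<Suc n. ff (int x) l) = ff (int n) (Suc l) + int (Suc l) * ff (int n) l"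
    using Suc by (simp add: algebra_simps)
  also have "\<dots> = ff (int n) l * (int n - int l) + int (Suc l) * ff (int n) l"
    by (simp add: ff_Suc)
  also have "\<dots> = (int n + 1) * ff (int n) l" by (simp add: algebra_simps)
  also have "\<dots> = ff (int (Suc n)) (Suc l)" by (simp only: of_nat_Suc add.commute[of 1 "int n"] ff_Suc_Suc)
  finally show ?case .
qed

lemma prod_neg_Suc: "(\<Prod>i<l. - int (Suc i)) = (-1) ^ l * int (fact l)"
proof (induction l)
  case 0 then show ?case by simp
next
  case (Suc l)
  then show ?case by (simp add: algebra_simps)
qed

lemma ff_cong: "[(\<Prod>i<l. x - int (Suc i)) = (-1) ^ l * int (fact l)] (mod x)"
proof -
  have "[(\<Prod>i<l. x - int (Suc i)) = (\<Prod>i<l. - int (Suc i))] (mod x)"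
  proof (rule cong_prod)
    fix i
    show "[x - int (Suc i) = - int (Suc i)] (mod x)"
      by (simp add: cong_def)
  qed
  then show ?thesis by (simp only: prod_neg_Suc)
qed

lemma of_int_fact_eq[simp]: "(of_int (fact l) :: 'a::comm_ring_1) = of_nat (fact l)"
  by (metis of_int_of_nat_eq of_nat_fact)

lemma padic_lim_by:
  assumes "\<And>N. \<exists>w\<in>Zp. a N - L = c * (of_nat (CARD('p) ^ N) * w)"
  shows "padic_lim a (L :: 'p::prime_card qp)"
  unfolding padic_lim_pZ
proof
  fix M
  obtain e where e: "of_nat (CARD('p) ^ e) * c \<in> (Zp :: 'p qp set)" using scale_Zp by blast
  have "pZ M (a N - L)" if "N \<ge> M + e" for N
  proof -
    obtain w where w: "w \<in> Zp" "a N - L = c * (of_nat (CARD('p) ^ N) * w)" using assms by blast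
    have "pZ N (of_nat (CARD('p) ^ N) * w)" unfolding pZ_def using w by blast
    then have "pZ (M + e) (of_nat (CARD('p) ^ N) * w)" using that by (rule_tac pZ_mono) auto
    then show ?thesis using pZ_scale[OF e] w(2) by simp
  qed
  then show "\<exists>N0. \<forall>N\<ge>N0. pZ M (a N - L)" by blast
qed


lemma has_volk_ff:
  "has_volk (\<lambda>x. of_int (ff (int x) l))
     ((-1) ^ l * of_nat (fact l) * (ninv (Suc l) :: 'p::prime_card qp))"
  unfolding has_volk_def
proof (rule padic_lim_by[where c = "ninv (Suc l)"])
  fix N
  define n where "n = CARD('p) ^ N"
  have n0: "n > 0" using P_gt1[where 'p='p] by (simp add: n_def)
  define G where "G = (\<Prod>i<l. int n - int (Suc i))"
  obtain w where w: "G = (-1) ^ l * int (fact l) + int n * w"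
    using ff_cong[where l=l and x="int n"] unfolding G_def[symmetric]
    by (metis cong_iff_lin cong_sym)
  have s: "int (Suc l) * (\<Sum>x<n. ff (int x) l) = int n * G"
    using ff_sum[of l n] by (simp add: ff_Suc_shift G_def)
  have hl: "of_nat (Suc l) * (ninv (Suc l) :: 'p qp) = 1" by (rule ninv) simp
  have hn: "of_nat n * (ninv n :: 'p qp) = 1" using n0 by (rule ninv)
  have "avg (\<lambda>x. of_int (ff (int x) l)) N = of_int (\<Sum>x<n. ff (int x) l) * (ninv n :: 'p qp)"
    by (simp add: avg_def n_def)
  also have "of_int (\<Sum>x<n. ff (int x) l) = (of_nat (Suc l) * ninv (Suc l)) * (of_int (\<Sum>x<n. ff (int x) l) :: 'p qp)"
    by (simp only: hl mult_1_left)
  also have "\<dots> = ninv (Suc l) * of_int (int (Suc l) * (\<Sum>x<n. ff (int x) l))"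
    by (simp only: of_int_mult of_int_of_nat_eq ac_simps)
  also have "\<dots> = ninv (Suc l) * (of_nat n * of_int G)"
    by (simp only: s of_int_mult of_int_of_nat_eq)
  also have "ninv (Suc l) * (of_nat n * of_int G) * ninv n = ninv (Suc l) * of_int G * (of_nat n * (ninv n :: 'p qp))"
    by (simp only: ac_simps)
  also have "\<dots> = ninv (Suc l) * of_int G" by (simp only: hn mult_1_right)
  finally have av: "avg (\<lambda>x. of_int (ff (int x) l)) N = ninv (Suc l) * (of_int G :: 'p qp)" .
  have "(of_int G :: 'p qp) = (-1) ^ l * of_nat (fact l) + of_nat n * of_int w"
    unfolding w by simp
  then have "avg (\<lambda>x. of_int (ff (int x) l)) N - (-1) ^ l * of_nat (fact l) * ninv (Suc l)
     = ninv (Suc l) * (of_nat n * (of_int w :: 'p qp))"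
    unfolding av by (simp add: algebra_simps)
  then show "\<exists>w\<in>(Zp :: 'p qp set). avg (\<lambda>x. of_int (ff (int x) l)) N - (-1) ^ l * of_nat (fact l) * ninv (Suc l) =
       ninv (Suc l) * (of_nat (CARD('p) ^ N) * w)"
    unfolding n_def by (rule bexI[of _ "of_int w"]) (rule Zp_of_int)
qed

lemma power_ff: "x ^ m = (\<Sum>l\<le>m. int (Stirling m l) * ff x l)"
proof (induction m)
  case 0 then show ?case by simp
next
  case (Suc m)
  have A: "(\<Sum>l\<le>m. int (Stirling m l) * int l * ff x l) =
        (\<Sum>l\<le>m. int (Suc l * Stirling m (Suc l)) * ff x (Suc l))"
  proof -
    have "(\<Sum>l\<le>m. int (Stirling m l) * int l * ff x l) = (\<Sum>l<Suc m. int (Stirling m l) * int l * ff x l)"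
      by (simp add: lessThan_Suc_atMost)
    also have "\<dots> = (\<Sum>l<m. int (Stirling m (Suc l)) * int (Suc l) * ff x (Suc l))"
      by (subst sum.lessThan_Suc_shift) simp
    also have "\<dots> = (\<Sum>l<Suc m. int (Suc l * Stirling m (Suc l)) * ff x (Suc l))"
      by (simp add: algebra_simps)
    also have "\<dots> = (\<Sum>l\<le>m. int (Suc l * Stirling m (Suc l)) * ff x (Suc l))"
      by (simp add: lessThan_Suc_atMost)
    finally show ?thesis .
  qed
  have "x ^ Suc m = (\<Sum>l\<le>m. int (Stirling m l) * (x * ff x l))"
    using Suc by (simp add: sum_distrib_left ac_simps)
  also have "\<dots> = (\<Sum>l\<le>m. int (Stirling m l) * ff x (Suc l) + int (Stirling m l) * int l * ff x l)"
    by (rule sum.cong) (simp_all add: ff_Suc algebra_simps)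
  also have "\<dots> = (\<Sum>l\<le>m. int (Stirling m l) * ff x (Suc l)) + (\<Sum>l\<le>m. int (Stirling m l) * int l * ff x l)"
    by (rule sum.distrib)
  also have "\<dots> = (\<Sum>l\<le>m. int (Stirling (Suc m) (Suc l)) * ff x (Suc l))"
    unfolding A by (simp add: sum.distrib[symmetric] algebra_simps)
  also have "\<dots> = (\<Sum>l\<le>Suc m. int (Stirling (Suc m) l) * ff x l)"
    by (subst sum.atMost_Suc_shift) simp
  finally show ?case .
qed

definition bern :: "nat \<Rightarrow> 'p::prime_card qp" where
  "bern m = (\<Sum>l\<le>m. of_nat (Stirling m l) * ((-1) ^ l * of_nat (fact l) * ninv (Suc l)))"

lemma has_volk_power: "has_volk (\<lambda>x. (of_nat x :: 'p::prime_card qp) ^ m) (bern m)"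
proof -
  have "has_volk (\<lambda>x. \<Sum>l\<le>m. of_nat (Stirling m l) * (of_int (ff (int x) l) :: 'p qp)) (bern m)"
    unfolding bern_def by (intro has_volk_sum has_volk_cmult has_volk_ff) auto
  moreover have "(\<lambda>x. \<Sum>l\<le>m. of_nat (Stirling m l) * (of_int (ff (int x) l) :: 'p qp)) = (\<lambda>x. of_nat x ^ m)"
  proof
    fix x
    have "(of_nat x :: 'p qp) ^ m = of_int (int x ^ m)" by simp
    also have "\<dots> = (\<Sum>l\<le>m. of_nat (Stirling m l) * of_int (ff (int x) l))"
      unfolding power_ff[of "int x" m] by simp
    finally show "(\<Sum>l\<le>m. of_nat (Stirling m l) * (of_int (ff (int x) l) :: 'p qp)) = of_nat x ^ m" by simp
  qed
  ultimately show ?thesis by simp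
qed



lemma mvolk_poly:
  "finite S \<Longrightarrow> mvolkenborn k (\<lambda>xs. \<Sum>m\<in>S. c m * (of_nat (prod_list xs) :: 'p::prime_card qp) ^ m)
     = (\<Sum>m\<in>S. c m * bern m ^ k)"
proof (induction k arbitrary: c)
  case 0 then show ?case by simp
next
  case (Suc k)
  have "mvolkenborn (Suc k) (\<lambda>xs. \<Sum>m\<in>S. c m * (of_nat (prod_list xs) :: 'p qp) ^ m)
     = volkenborn (\<lambda>x. mvolkenborn k (\<lambda>xs. \<Sum>m\<in>S. (c m * of_nat x ^ m) * (of_nat (prod_list xs) :: 'p qp) ^ m))"
    by (simp add: power_mult_distrib ac_simps)
  also have "\<dots> = volkenborn (\<lambda>x. \<Sum>m\<in>S. (c m * bern m ^ k) * (of_nat x :: 'p qp) ^ m)"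
  proof -
    have e: "mvolkenborn k (\<lambda>xs. \<Sum>m\<in>S. (c m * of_nat x ^ m) * (of_nat (prod_list xs) :: 'p qp) ^ m)
       = (\<Sum>m\<in>S. (c m * of_nat x ^ m) * bern m ^ k)" for x
      using Suc.IH[of "\<lambda>m. c m * of_nat x ^ m"] Suc.prems by simp
    show ?thesis unfolding e by (simp add: ac_simps)
  qed
  also have "\<dots> = (\<Sum>m\<in>S. (c m * bern m ^ k) * bern m)"
    by (intro volkenborn_eq has_volk_sum has_volk_cmult has_volk_power Suc.prems)
  also have "\<dots> = (\<Sum>m\<in>S. c m * bern m ^ Suc k)" by (simp add: ac_simps)
  finally show ?case .
qed

theorem theorem2p2:
  fixes \<alpha> :: "nat \<Rightarrow> 'p::prime_card qp" and r :: "nat \<Rightarrow> nat" and k n :: nat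
  assumes "k \<ge> 1"
    and "\<forall>i<n. \<alpha> i \<in> Zp"
  shows "mvolkenborn k (\<lambda>xs. \<Prod>i<n. (of_nat (prod_list xs) - \<alpha> i) ^ r i)
    = (\<Sum>m=0..(\<Sum>i<n. r i). comtet1 \<alpha> n r m *
         (\<Sum>l\<in>{1..k} \<rightarrow>\<^sub>E {0..m}. \<Prod>i=1..k.
            qp_div ((-1) ^ l i * of_nat (fact (l i)) * of_nat (Stirling m (l i)))
                   (of_nat (l i + 1))))"
proof -
  define Q where "Q = (\<Prod>i<n. [:- \<alpha> i, 1:] ^ r i)"
  define D where "D = (\<Sum>i<n. r i)"
  have degQ: "degree Q \<le> D"
  proof -
    have "degree Q \<le> (\<Sum>i<n. degree ([:- \<alpha> i, 1:] ^ r i))"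
      unfolding Q_def using degree_prod_sum_le[of "{..<n}" "\<lambda>i. [:- \<alpha> i, 1:] ^ r i"] by (simp add: o_def)
    also have "\<dots> \<le> (\<Sum>i<n. r i)"
    proof (rule sum_mono)
      fix i
      have "degree ([:- \<alpha> i, 1:] ^ r i) \<le> degree [:- \<alpha> i, 1:] * r i" by (rule degree_power_le)
      then show "degree ([:- \<alpha> i, 1:] ^ r i) \<le> r i" by simp
    qed
    finally show ?thesis by (simp add: D_def)
  qed
  have integrand: "(\<Prod>i<n. (y - \<alpha> i) ^ r i) = (\<Sum>m\<in>{0..D}. comtet1 \<alpha> n r m * y ^ m)" for y
  proof -
    have "(\<Prod>i<n. (y - \<alpha> i) ^ r i) = poly Q y"
      unfolding Q_def by (simp add: poly_prod)
    also have "\<dots> = poly (\<Sum>i\<le>D. monom (coeff Q i) i) y"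
      using poly_as_sum_of_monoms'[OF degQ] by simp
    also have "\<dots> = (\<Sum>m\<le>D. coeff Q m * y ^ m)"
      by (simp add: poly_sum poly_monom)
    finally show ?thesis by (simp add: comtet1_def Q_def atLeast0AtMost)
  qed
  have inner: "(\<Sum>l\<in>{1..k} \<rightarrow>\<^sub>E {0..m}. \<Prod>i=1..k.
            qp_div ((-1) ^ l i * of_nat (fact (l i)) * of_nat (Stirling m (l i)))
                   (of_nat (l i + 1))) = (bern m :: 'p qp) ^ k" for m
  proof -
    have "(\<Sum>l\<in>{1..k} \<rightarrow>\<^sub>E {0..m}. \<Prod>i=1..k.
            qp_div ((-1) ^ l i * of_nat (fact (l i)) * of_nat (Stirling m (l i)))
                   (of_nat (l i + 1)) :: 'p qp)
        = (\<Prod>i=1..k. \<Sum>j\<in>{0..m}. qp_div ((-1) ^ j * of_nat (fact j) * of_nat (Stirling m j))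
                   (of_nat (j + 1)))"
      by (rule prod_sum_PiE[symmetric]) auto
    also have "\<dots> = (\<Sum>j\<in>{0..m}. qp_div ((-1) ^ j * of_nat (fact j) * of_nat (Stirling m j))
                   (of_nat (j + 1))) ^ k"
      by simp
    also have "(\<Sum>j\<in>{0..m}. qp_div ((-1) ^ j * of_nat (fact j) * of_nat (Stirling m j))
                   (of_nat (j + 1))) = (bern m :: 'p qp)"
      unfolding bern_def atLeast0AtMost
    proof (rule sum.cong)
      fix j
      have "qp_div ((-1) ^ j * of_nat (fact j) * of_nat (Stirling m j)) (of_nat (Suc j))
           = ((-1) ^ j * of_nat (fact j) * of_nat (Stirling m j)) * (ninv (Suc j) :: 'p qp)"
        by (rule qp_div_nat) simp
      then show "qp_div ((-1) ^ j * of_nat (fact j) * of_nat (Stirling m j)) (of_nat (j + 1)) =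
         of_nat (Stirling m j) * ((-1) ^ j * of_nat (fact j) * (ninv (Suc j) :: 'p qp))"
        by (simp add: ac_simps)
    qed simp
    finally show ?thesis .
  qed
  have "mvolkenborn k (\<lambda>xs. \<Prod>i<n. (of_nat (prod_list xs) - \<alpha> i) ^ r i)
      = mvolkenborn k (\<lambda>xs. \<Sum>m\<in>{0..D}. comtet1 \<alpha> n r m * (of_nat (prod_list xs) :: 'p qp) ^ m)"
    by (simp only: integrand)
  also have "\<dots> = (\<Sum>m\<in>{0..D}. comtet1 \<alpha> n r m * bern m ^ k)"
    by (rule mvolk_poly) simp
  finally show ?thesis by (simp only: inner D_def)
qed


end
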